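(* Let $n_*>2$ be an integer and let $\phi(b)=\upsilon\log b\,[\log\log b]^{1+\varepsilon}$ for $b\ge n_*+1$, with $\upsilon,\varepsilon>0$ such that $\phi(n_*+1)>1$. Let $\mathsf{G}\in\mathbb{G}(n_*,\phi)$. Then for any $\theta>0$ there exists $\underline{\alpha}\ge0$ (possibly depending on $\theta,n_*,\upsilon,\varepsilon$) such that $\mathit{\Theta}(\alpha,\theta)<\infty$ whenever $\alpha>\underline{\alpha}$.
   Context: All graphs $\mathsf{G}=(\mathsf{V},\mathsf{E})$ are countable, connected, locally finite and undirected; $n(x)$ is the degree of $x$, $\rho$ the path distance, $o\in\mathsf{V}$ a fixed root. For $\alpha,\theta>0$: $\mathit{\Theta}(\alpha,\theta)=\sum_{x\in\mathsf{V}}\sum_{y\sim x}[n(x)n(y)]^\theta\exp[-\alpha\rho(o,x)]$. For an integer $n_*>2$ put $\mathsf{V}_*=\{x:n(x)\le n_*\}$ and $\mathsf{V}_*^c=\mathsf{V}\setminus\mathsf{V}_*$. For a strictly increasing $\phi:(n_*,+\infty)\to(0,+\infty)$, the family $\mathbb{G}(n_*,\phi)$ consists of the graphs such that $\rho(x,y)\ge\phi[\max\{n(x),n(y)\}]$ for all $x,y\in\mathsf{V}_*^c$ (no condition if $x$ or $y$ lies in $\mathsf{V}_*$). *)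

theory Defs
  imports "HOL-Analysis.Analysis"
begin

definition ugraph :: "'a set \<Rightarrow> ('a \<Rightarrow> 'a \<Rightarrow> bool) \<Rightarrow> bool" where
  "ugraph V E \<longleftrightarrow> (\<forall>x y. E x y \<longrightarrow> x \<in> V \<and> y \<in> V \<and> E y x \<and> x \<noteq> y)"

definition walk_len :: "('a \<Rightarrow> 'a \<Rightarrow> bool) \<Rightarrow> nat \<Rightarrow> 'a \<Rightarrow> 'a \<Rightarrow> bool" where
  "walk_len E n x y \<longleftrightarrow> (\<exists>f. f 0 = x \<and> f n = y \<and> (\<forall>i<n. E (f i) (f (Suc i))))"

definition connected_graph :: "'a set \<Rightarrow> ('a \<Rightarrow> 'a \<Rightarrow> bool) \<Rightarrow> bool" where
  "connected_graph V E \<longleftrightarrow> (\<forall>x\<in>V. \<forall>y\<in>V. \<exists>n. walk_len E n x y)"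

definition locally_finite_graph :: "'a set \<Rightarrow> ('a \<Rightarrow> 'a \<Rightarrow> bool) \<Rightarrow> bool" where
  "locally_finite_graph V E \<longleftrightarrow> (\<forall>x\<in>V. finite {y. E x y})"

definition deg :: "('a \<Rightarrow> 'a \<Rightarrow> bool) \<Rightarrow> 'a \<Rightarrow> nat" where
  "deg E x = card {y. E x y}"

definition gdist :: "('a \<Rightarrow> 'a \<Rightarrow> bool) \<Rightarrow> 'a \<Rightarrow> 'a \<Rightarrow> nat" where
  "gdist E x y = (LEAST n. walk_len E n x y)"

definition Theta :: "'a set \<Rightarrow> ('a \<Rightarrow> 'a \<Rightarrow> bool) \<Rightarrow> 'a \<Rightarrow> real \<Rightarrow> real \<Rightarrow> ennreal" where
  "Theta V E r0 \<alpha> \<theta> =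
     (\<Sum>\<^sub>\<infinity>(x,y)\<in>{(x,y). x \<in> V \<and> E x y}.
        ennreal ((real (deg E x) * real (deg E y)) powr \<theta> * exp (- \<alpha> * real (gdist E r0 x))))"

definition in_GG :: "'a set \<Rightarrow> ('a \<Rightarrow> 'a \<Rightarrow> bool) \<Rightarrow> nat \<Rightarrow> (real \<Rightarrow> real) \<Rightarrow> bool" where
  "in_GG V E nstar \<phi> \<longleftrightarrow>
     (\<forall>x\<in>V. \<forall>y\<in>V. deg E x > nstar \<longrightarrow> deg E y > nstar \<longrightarrow> x \<noteq> y \<longrightarrow>
        real (gdist E x y) \<ge> \<phi> (real (max (deg E x) (deg E y))))"

end

theory Submission
  imports Defs
begin

primrec gpaths :: "('a \<Rightarrow> 'a \<Rightarrow> bool) \<Rightarrow> 'a \<Rightarrow> nat \<Rightarrow> 'a list set" where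
  "gpaths E r 0 = {[r]}"
| "gpaths E r (Suc k) = (\<lambda>(p, y). y # p) ` (SIGMA p:gpaths E r k. {y. E (hd p) y \<and> gdist E r y = Suc k})"

fun lasthigh :: "('a \<Rightarrow> 'a \<Rightarrow> bool) \<Rightarrow> nat \<Rightarrow> 'a list \<Rightarrow> 'a option" where
  "lasthigh E n [] = None"
| "lasthigh E n (y # p) = (if deg E y > n then Some y else lasthigh E n p)"

locale gsetup =
  fixes V :: "'a set" and E :: "'a \<Rightarrow> 'a \<Rightarrow> bool" and r0 :: 'a
  assumes graph: "ugraph V E" and conn: "connected_graph V E"
    and lf: "locally_finite_graph V E" and root: "r0 \<in> V"
begin

lemma edge: "E x y \<Longrightarrow> x \<in> V \<and> y \<in> V \<and> E y x \<and> x \<noteq> y"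
  using graph unfolding ugraph_def by blast

lemma finN: "x \<in> V \<Longrightarrow> finite {y. E x y}"
  using lf unfolding locally_finite_graph_def by blast

lemma deg_pos: "E x y \<Longrightarrow> deg E x > 0"
  unfolding deg_def using finN edge card_gt_0_iff by fastforce

lemma walk_0: "walk_len E 0 x y \<longleftrightarrow> x = y"
  unfolding walk_len_def by auto

lemma walk_snoc: "walk_len E n x y \<Longrightarrow> E y z \<Longrightarrow> walk_len E (Suc n) x z"
proof -
  assume "walk_len E n x y" "E y z"
  then obtain f where f: "f 0 = x" "f n = y" "\<forall>i<n. E (f i) (f (Suc i))"
    unfolding walk_len_def by blast
  define g where "g = f(Suc n := z)"
  have "g 0 = x" "g (Suc n) = z" using f by (auto simp: g_def)
  moreover have "\<forall>i<Suc n. E (g i) (g (Suc i))"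
  proof (intro allI impI)
    fix i assume "i < Suc n"
    then show "E (g i) (g (Suc i))"
      using f \<open>E y z\<close> by (cases "i = n") (auto simp: g_def)
  qed
  ultimately show ?thesis unfolding walk_len_def by blast
qed

lemma walk_append: "walk_len E m x y \<Longrightarrow> walk_len E n y z \<Longrightarrow> walk_len E (m + n) x z"
proof (induction n arbitrary: z)
  case 0
  then show ?case by (simp add: walk_0)
next
  case (Suc n)
  from Suc.prems(2) obtain f where f: "f 0 = y" "f (Suc n) = z" "\<forall>i<Suc n. E (f i) (f (Suc i))"
    unfolding walk_len_def by blast
  have "walk_len E n y (f n)" unfolding walk_len_def using f by auto
  then have "walk_len E (m + n) x (f n)" using Suc by blast
  then show ?case using walk_snoc f by fastforce
qed

lemma walk_Suc_last: "walk_len E (Suc n) x y \<Longrightarrow> \<exists>z. walk_len E n x z \<and> E z y"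
  unfolding walk_len_def by fastforce

lemma gdist_walk: "x \<in> V \<Longrightarrow> y \<in> V \<Longrightarrow> walk_len E (gdist E x y) x y"
  unfolding gdist_def using conn unfolding connected_graph_def by (meson LeastI_ex)

lemma gdist_le: "walk_len E n x y \<Longrightarrow> gdist E x y \<le> n"
  unfolding gdist_def by (rule Least_le)

lemma gdist_refl: "gdist E x x = 0"
  using gdist_le walk_0 by blast

lemma gdist_adj: "x \<in> V \<Longrightarrow> y \<in> V \<Longrightarrow> E y z \<Longrightarrow> gdist E x z \<le> gdist E x y + 1"
  using gdist_walk walk_snoc gdist_le by fastforce

lemma gdist_tri: "x \<in> V \<Longrightarrow> y \<in> V \<Longrightarrow> z \<in> V \<Longrightarrow> gdist E x z \<le> gdist E x y + gdist E y z"
  using gdist_walk walk_append gdist_le by blast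

lemma gdist_zero: "x \<in> V \<Longrightarrow> y \<in> V \<Longrightarrow> gdist E x y = 0 \<Longrightarrow> y = x"
  using gdist_walk walk_0 by fastforce

lemma gdist_pred: "x \<in> V \<Longrightarrow> y \<in> V \<Longrightarrow> gdist E x y = Suc k \<Longrightarrow> \<exists>z. E z y \<and> gdist E x z = k"
proof -
  assume a: "x \<in> V" "y \<in> V" "gdist E x y = Suc k"
  then obtain z where z: "walk_len E k x z" "E z y" using gdist_walk walk_Suc_last by metis
  have "gdist E x z \<le> k" using z gdist_le by blast
  moreover have "gdist E x y \<le> gdist E x z + 1" using gdist_adj a z edge by blast
  ultimately show ?thesis using a z by (intro exI[of _ z]) auto
qed


definition Pi :: "'a list \<Rightarrow> real" where
  "Pi p = prod_list (map (\<lambda>v. real (deg E v)) (tl p))"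

definition Q :: "'a list \<Rightarrow> real" where
  "Q p = prod_list (map (\<lambda>v. real (deg E v)) p)"

lemma Q_nonneg: "Q p \<ge> 0"
  unfolding Q_def by (induction p) auto

lemma Pi_nonneg: "Pi p \<ge> 0"
proof -
  have "Pi p = Q (tl p)" unfolding Pi_def Q_def by simp
  then show ?thesis using Q_nonneg by simp
qed

lemma Pi_cons: "Pi (y # p) = Q p"
  unfolding Pi_def Q_def by simp

lemma Q_cons: "Q (y # p) = real (deg E y) * Q p"
  unfolding Q_def by simp

lemma Q_Pi: "p \<noteq> [] \<Longrightarrow> Q p = real (deg E (hd p)) * Pi p"
  by (cases p) (auto simp: Q_cons Pi_cons)

lemma paths_basic: "p \<in> gpaths E r0 k \<Longrightarrow> p \<noteq> [] \<and> set p \<subseteq> V \<and> gdist E r0 (hd p) = k \<and>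
   (\<forall>z\<in>set p. gdist E r0 z \<le> k \<and> gdist E z (hd p) + gdist E r0 z \<le> k)"
proof (induction k arbitrary: p)
  case 0
  then show ?case using root by (auto simp: gdist_refl)
next
  case (Suc k)
  then obtain q y where q: "p = y # q" "q \<in> gpaths E r0 k" "E (hd q) y" "gdist E r0 y = Suc k"
    by auto
  note IH = Suc.IH[OF q(2)]
  have yV: "y \<in> V" using edge q(3) by blast
  have hqV: "hd q \<in> V" using IH hd_in_set by blast
  have "gdist E z y + gdist E r0 z \<le> Suc k" if "z \<in> set q" for z
  proof -
    have "z \<in> V" using IH that by blast
    then have "gdist E z y \<le> gdist E z (hd q) + 1" using gdist_adj hqV q(3) by blast
    then show ?thesis using IH that by fastforce
  qed
  then show ?case using q IH yV by (auto simp: gdist_refl)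
qed

lemma paths_fin: "finite (gpaths E r0 k)"
proof (induction k)
  case 0
  then show ?case by simp
next
  case (Suc k)
  have "finite {y. E (hd p) y \<and> gdist E r0 y = Suc k}" if "p \<in> gpaths E r0 k" for p
  proof -
    have "hd p \<in> V" using paths_basic[OF that] hd_in_set by blast
    then show ?thesis using finN by (rule_tac finite_subset[of _ "{y. E (hd p) y}"]) auto
  qed
  then show ?case using Suc by auto
qed

lemma sphere_sub: "y \<in> V \<Longrightarrow> gdist E r0 y = k \<Longrightarrow> y \<in> hd ` gpaths E r0 k"
proof (induction k arbitrary: y)
  case 0
  then show ?case using gdist_zero root by auto
next
  case (Suc k)
  then obtain z where z: "E z y" "gdist E r0 z = k" using gdist_pred root by blast
  then have "z \<in> V" using edge by blast
  then obtain p where p: "p \<in> gpaths E r0 k" "hd p = z" using Suc.IH z by blast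
  have mem: "(p, y) \<in> (SIGMA p:gpaths E r0 k. {y. E (hd p) y \<and> gdist E r0 y = Suc k})"
    using p z Suc.prems by simp
  have "y # p \<in> gpaths E r0 (Suc k)" unfolding gpaths.simps by (rule image_eqI[OF _ mem]) simp
  then show ?case by (rule rev_image_eqI) simp
qed

lemma Pi_pos: "p \<in> gpaths E r0 k \<Longrightarrow> Pi p > 0"
proof (induction k arbitrary: p)
  case 0
  then show ?case by (auto simp: Pi_def)
next
  case (Suc k)
  then obtain q y where q: "p = y # q" "q \<in> gpaths E r0 k" "E (hd q) y"
    by auto
  have "q \<noteq> []" using paths_basic[OF q(2)] by blast
  then have "Pi p = real (deg E (hd q)) * Pi q" using q Pi_cons Q_Pi by simp
  then show ?case using Suc.IH[OF q(2)] deg_pos[OF q(3)] by simp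
qed

lemma paths_sum: "(\<Sum>p\<in>gpaths E r0 k. 1 / Pi p) \<le> 1"
proof (induction k)
  case 0
  then show ?case by (simp add: Pi_def)
next
  case (Suc k)
  define Y where "Y p = {y. E (hd p) y \<and> gdist E r0 y = Suc k}" for p
  have inj: "inj_on (\<lambda>(p, y). y # p) (SIGMA p:gpaths E r0 k. Y p)"
    by (auto simp: inj_on_def)
  have finY: "finite (Y p)" if "p \<in> gpaths E r0 k" for p
  proof -
    have "hd p \<in> V" using paths_basic[OF that] hd_in_set by blast
    then show ?thesis using finN unfolding Y_def by (rule_tac finite_subset[of _ "{y. E (hd p) y}"]) auto
  qed
  have e: "gpaths E r0 (Suc k) = (\<lambda>(p, y). y # p) ` (SIGMA p:gpaths E r0 k. Y p)"
    by (simp add: Y_def)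
  have "(\<Sum>p\<in>gpaths E r0 (Suc k). 1 / Pi p) = (\<Sum>(p,y)\<in>(SIGMA p:gpaths E r0 k. Y p). 1 / Pi (y # p))"
    unfolding e sum.reindex[OF inj] by (intro sum.cong) auto
  also have "\<dots> = (\<Sum>p\<in>gpaths E r0 k. \<Sum>y\<in>Y p. 1 / Pi (y # p))"
    by (rule sum.Sigma[symmetric]) (use paths_fin finY in auto)
  also have "\<dots> = (\<Sum>p\<in>gpaths E r0 k. \<Sum>y\<in>Y p. 1 / Q p)"
    by (simp add: Pi_cons)
  also have "\<dots> \<le> (\<Sum>p\<in>gpaths E r0 k. 1 / Pi p)"
  proof (rule sum_mono)
    fix p assume p: "p \<in> gpaths E r0 k"
    have hV: "hd p \<in> V" using paths_basic[OF p] hd_in_set by blast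
    have cY: "card (Y p) \<le> deg E (hd p)"
      unfolding deg_def Y_def using finN[OF hV] by (intro card_mono) auto
    have Qp: "Q p = real (deg E (hd p)) * Pi p" using Q_Pi paths_basic[OF p] by blast
    have Pp: "Pi p > 0" using Pi_pos[OF p] .
    show "(\<Sum>y\<in>Y p. 1 / Q p) \<le> 1 / Pi p"
    proof (cases "deg E (hd p) = 0")
      case True
      then show ?thesis using cY Pp by simp
    next
      case False
      have "(\<Sum>y\<in>Y p. 1 / Q p) = real (card (Y p)) / Q p" by simp
      also have "\<dots> \<le> real (deg E (hd p)) / Q p"
        using cY Q_nonneg by (intro divide_right_mono) auto
      also have "\<dots> = 1 / Pi p" using Qp False by simp
      finally show ?thesis .
    qed
  qed
  finally show ?case using Suc.IH by linarith
qed

lemma paths_card: assumes "\<And>p. p \<in> gpaths E r0 k \<Longrightarrow> Pi p \<le> M" and "M > 0"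
  shows "real (card (gpaths E r0 k)) \<le> M"
proof -
  have "(\<Sum>p\<in>gpaths E r0 k. 1 / M) \<le> (\<Sum>p\<in>gpaths E r0 k. 1 / Pi p)"
    using assms Pi_pos by (intro sum_mono divide_left_mono) auto
  then have "real (card (gpaths E r0 k)) / M \<le> 1" using paths_sum[of k] by simp
  then show ?thesis using assms by (simp add: divide_le_eq)
qed

lemma sphere_card: assumes "\<And>p. p \<in> gpaths E r0 k \<Longrightarrow> Pi p \<le> M" and "M > 0"
  shows "real (card {x\<in>V. gdist E r0 x = k}) \<le> M"
proof -
  have "{x\<in>V. gdist E r0 x = k} \<subseteq> hd ` gpaths E r0 k" using sphere_sub by blast
  then have "card {x\<in>V. gdist E r0 x = k} \<le> card (gpaths E r0 k)"
    using paths_fin by (meson card_image_le card_mono finite_imageI le_trans)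
  moreover have "real (card (gpaths E r0 k)) \<le> M" by (rule paths_card) (use assms in auto)
  ultimately show ?thesis by linarith
qed

end


locale gparam = gsetup V E r0 for V :: "'a set" and E and r0 +
  fixes n :: nat and \<gamma> :: real
  assumes n1: "n \<ge> 1" and gpos: "\<gamma> > 0"
    and sep: "\<And>x y. x \<in> V \<Longrightarrow> y \<in> V \<Longrightarrow> x \<noteq> y \<Longrightarrow> deg E x > n \<Longrightarrow> deg E y > n \<Longrightarrow>
       real (deg E x) \<le> exp (\<gamma> * gdist E x y) \<and> real (deg E y) \<le> exp (\<gamma> * gdist E x y)"
begin

lemma lasthigh_Some: "lasthigh E n p = Some h \<Longrightarrow> h \<in> set p \<and> deg E h > n"
  by (induction p) (auto split: if_splits)

lemma lasthigh_None: "lasthigh E n p = None \<Longrightarrow> z \<in> set p \<Longrightarrow> deg E z \<le> n"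
  by (induction p) (auto split: if_splits)

definition Gw :: "'a list \<Rightarrow> real" where
  "Gw p = (case lasthigh E n p of None \<Rightarrow> 1 | Some h \<Rightarrow> exp (\<gamma> * gdist E r0 h) * real (deg E h))"

lemma Gw_nonneg: "Gw p \<ge> 0"
  unfolding Gw_def by (auto split: option.splits)

lemma inv: "p \<in> gpaths E r0 k \<Longrightarrow> Q p \<le> real n ^ (k + 1) * Gw p"
proof (induction k arbitrary: p)
  case 0
  then have p: "p = [r0]" by simp
  show ?case
  proof (cases "deg E r0 > n")
    case True
    then show ?thesis using p n1 by (simp add: Gw_def Q_def gdist_refl)
  next
    case False
    then show ?thesis using p by (simp add: Gw_def Q_def)
  qed
next
  case (Suc k)
  then obtain q y where q: "p = y # q" "q \<in> gpaths E r0 k" "E (hd q) y" "gdist E r0 y = Suc k"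
    by auto
  note IH = Suc.IH[OF q(2)]
  note B = paths_basic[OF q(2)]
  have yV: "y \<in> V" using edge q(3) by blast
  have Qp: "Q p = real (deg E y) * Q q" using q Q_cons by simp
  show ?case
  proof (cases "deg E y > n")
    case False
    then have G: "Gw p = Gw q" using q by (simp add: Gw_def)
    have "Q p \<le> real n * (real n ^ (k + 1) * Gw q)"
      unfolding Qp using False IH Q_nonneg by (intro mult_mono) auto
    then show ?thesis using G by (simp add: algebra_simps)
  next
    case True
    then have G: "Gw p = exp (\<gamma> * (Suc k)) * real (deg E y)" using q by (simp add: Gw_def)
    have key: "Q q \<le> real n ^ (k + 1) * exp (\<gamma> * (Suc k))"
    proof (cases "lasthigh E n q")
      case None
      then have "Gw q = 1" by (simp add: Gw_def)
      have "exp (\<gamma> * (Suc k)) \<ge> 1" using gpos by simp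
      then have "Q q \<le> real n ^ (k + 1) * 1" using IH \<open>Gw q = 1\<close> by simp
      also have "\<dots> \<le> real n ^ (k + 1) * exp (\<gamma> * (Suc k))"
        by (intro mult_left_mono) (use \<open>exp (\<gamma> * (Suc k)) \<ge> 1\<close> in auto)
      finally show ?thesis .
    next
      case (Some h)
      then have h: "h \<in> set q" "deg E h > n" using lasthigh_Some by auto
      have hV: "h \<in> V" using h B by blast
      have hq: "gdist E h (hd q) + gdist E r0 h \<le> k" using B h by blast
      have "hd q \<in> V" using B hd_in_set by blast
      then have "gdist E h y \<le> gdist E h (hd q) + 1" using gdist_adj hV q(3) by blast
      then have d: "gdist E r0 h + gdist E h y \<le> Suc k" using hq by linarith
      have "h \<noteq> y" using hq q(4) by auto
      then have dh: "real (deg E h) \<le> exp (\<gamma> * gdist E h y)" using sep hV yV h True by blast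
      have "Gw q = exp (\<gamma> * gdist E r0 h) * real (deg E h)" using Some by (simp add: Gw_def)
      also have "\<dots> \<le> exp (\<gamma> * gdist E r0 h) * exp (\<gamma> * gdist E h y)"
        using dh by simp
      also have "\<dots> = exp (\<gamma> * (real (gdist E r0 h) + real (gdist E h y)))"
        by (simp add: exp_add[symmetric] algebra_simps)
      also have "\<dots> \<le> exp (\<gamma> * (Suc k))"
      proof -
        have "real (gdist E r0 h) + real (gdist E h y) \<le> real (Suc k)" using d by linarith
        then show ?thesis using gpos by simp
      qed
      finally have Gq: "Gw q \<le> exp (\<gamma> * (Suc k))" .
      have "Q q \<le> real n ^ (k + 1) * Gw q" using IH .
      also have "\<dots> \<le> real n ^ (k + 1) * exp (\<gamma> * (Suc k))"
        by (intro mult_left_mono Gq) auto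
      finally show ?thesis .
    qed
    have "Q p \<le> real (deg E y) * (real n ^ (k + 1) * exp (\<gamma> * (Suc k)))"
      unfolding Qp using key by (intro mult_left_mono) auto
    also have "\<dots> \<le> real n * (real n ^ (k + 1) * exp (\<gamma> * (Suc k))) * real (deg E y)"
    proof -
      have "0 \<le> real n ^ (k + 1) * exp (\<gamma> * (Suc k)) * real (deg E y)" by simp
      then have "1 * (real n ^ (k + 1) * exp (\<gamma> * (Suc k)) * real (deg E y))
          \<le> real n * (real n ^ (k + 1) * exp (\<gamma> * (Suc k)) * real (deg E y))"
        using n1 by (intro mult_right_mono) auto
      then show ?thesis by (simp add: algebra_simps)
    qed
    finally show ?thesis using G by (simp add: algebra_simps)
  qed
qed

lemma deg_bound: "\<exists>A\<ge>1. \<forall>x\<in>V. real (deg E x) \<le> A * exp (\<gamma> * gdist E r0 x)"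
proof (cases "\<exists>z\<in>V. deg E z > n")
  case False
  have "real (deg E x) \<le> real n * exp (\<gamma> * gdist E r0 x)" if "x \<in> V" for x
  proof -
    have "deg E x \<le> n" using False that by (meson not_less)
    then have "real (deg E x) \<le> real n * 1" by simp
    also have "\<dots> \<le> real n * exp (\<gamma> * gdist E r0 x)" using gpos by (intro mult_left_mono) auto
    finally show ?thesis .
  qed
  then show ?thesis using n1 by (intro exI[of _ "real n"]) auto
next
  case True
  then obtain z where z: "z \<in> V" "deg E z > n" by blast
  define A where "A = max (real n) (max (real (deg E z)) (exp (\<gamma> * gdist E z r0)))"
  have A1: "A \<ge> 1" using n1 unfolding A_def by auto
  have "real (deg E x) \<le> A * exp (\<gamma> * gdist E r0 x)" if x: "x \<in> V" for x
  proof -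
    have e1: "exp (\<gamma> * gdist E r0 x) \<ge> 1" using gpos by simp
    have Ale: "A \<le> A * exp (\<gamma> * gdist E r0 x)" using e1 A1 by simp
    consider "deg E x \<le> n" | "x = z" | "deg E x > n" "x \<noteq> z" by linarith
    then show ?thesis
    proof cases
      case 1
      then have "real (deg E x) \<le> A" unfolding A_def by auto
      then show ?thesis using Ale by linarith
    next
      case 2
      then have "real (deg E x) \<le> A" unfolding A_def by auto
      then show ?thesis using Ale by linarith
    next
      case 3
      then have "real (deg E x) \<le> exp (\<gamma> * gdist E z x)" using sep z x by metis
      also have "\<dots> \<le> exp (\<gamma> * (real (gdist E z r0) + real (gdist E r0 x)))"
      proof -
        have "real (gdist E z x) \<le> real (gdist E z r0) + real (gdist E r0 x)"
          using gdist_tri[OF z(1) root x] by linarith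
        then show ?thesis using gpos by simp
      qed
      also have "\<dots> = exp (\<gamma> * gdist E z r0) * exp (\<gamma> * gdist E r0 x)"
        by (simp add: exp_add[symmetric] algebra_simps)
      also have "\<dots> \<le> A * exp (\<gamma> * gdist E r0 x)"
        unfolding A_def by (intro mult_right_mono) auto
      finally show ?thesis .
    qed
  qed
  then show ?thesis using A1 by blast
qed


lemma Gw_bound: assumes A1: "A \<ge> 1" and DB: "\<forall>x\<in>V. real (deg E x) \<le> A * exp (\<gamma> * gdist E r0 x)"
  and p: "p \<in> gpaths E r0 k"
  shows "Gw p \<le> A * exp (2 * \<gamma> * k)"
proof (cases "lasthigh E n p")
  case None
  then have "Gw p = 1" by (simp add: Gw_def)
  moreover have "1 \<le> A * exp (2 * \<gamma> * k)"
  proof -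
    have "exp (2 * \<gamma> * k) \<ge> 1" using gpos by simp
    then have "1 * 1 \<le> A * exp (2 * \<gamma> * k)" using A1 by (rule_tac mult_mono) auto
    then show ?thesis by simp
  qed
  ultimately show ?thesis by simp
next
  case (Some h)
  then have h: "h \<in> set p" using lasthigh_Some by auto
  have hV: "h \<in> V" and hk: "gdist E r0 h \<le> k" using paths_basic[OF p] h by auto
  have "Gw p = exp (\<gamma> * gdist E r0 h) * real (deg E h)" using Some by (simp add: Gw_def)
  also have "\<dots> \<le> exp (\<gamma> * gdist E r0 h) * (A * exp (\<gamma> * gdist E r0 h))"
    using DB hV by (intro mult_left_mono) auto
  also have "\<dots> = A * exp (2 * \<gamma> * gdist E r0 h)"
    by (simp add: exp_add[symmetric] algebra_simps)
  also have "\<dots> \<le> A * exp (2 * \<gamma> * k)"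
    using A1 gpos hk by (intro mult_left_mono) auto
  finally show ?thesis .
qed

lemma Pi_bound: assumes A1: "A \<ge> 1" and DB: "\<forall>x\<in>V. real (deg E x) \<le> A * exp (\<gamma> * gdist E r0 x)"
  and p: "p \<in> gpaths E r0 k"
  shows "Pi p \<le> real n ^ k * A * exp (2 * \<gamma> * k)"
proof (cases k)
  case 0
  then have "p = [r0]" using p by simp
  then have "Pi p = 1" by (simp add: Pi_def)
  moreover have "1 \<le> A * exp (2 * \<gamma> * k)"
  proof -
    have "exp (2 * \<gamma> * k) \<ge> 1" using gpos by simp
    then have "1 * 1 \<le> A * exp (2 * \<gamma> * k)" using A1 by (rule_tac mult_mono) auto
    then show ?thesis by simp
  qed
  ultimately show ?thesis using 0 by simp
next
  case (Suc j)
  then obtain q y where q: "p = y # q" "q \<in> gpaths E r0 j" using p by auto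
  have "Pi p = Q q" using q Pi_cons by simp
  also have "\<dots> \<le> real n ^ (j + 1) * Gw q" using inv[OF q(2)] .
  also have "\<dots> \<le> real n ^ (j + 1) * (A * exp (2 * \<gamma> * j))"
    using Gw_bound[OF A1 DB q(2)] by (intro mult_left_mono) auto
  also have "\<dots> \<le> real n ^ (j + 1) * (A * exp (2 * \<gamma> * k))"
    using Suc gpos A1 by (intro mult_left_mono) auto
  finally show ?thesis using Suc by (simp add: algebra_simps)
qed

lemma sphere_bound: assumes A1: "A \<ge> 1" and DB: "\<forall>x\<in>V. real (deg E x) \<le> A * exp (\<gamma> * gdist E r0 x)"
  shows "real (card {x\<in>V. gdist E r0 x = k}) \<le> A * exp (k * (ln (real n) + 2 * \<gamma>))"
proof -
  have "real (card {x\<in>V. gdist E r0 x = k}) \<le> real n ^ k * A * exp (2 * \<gamma> * k)"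
    using Pi_bound[OF A1 DB] n1 A1 by (intro sphere_card) auto
  also have "real n ^ k = exp (k * ln (real n))"
    using n1 by (simp add: exp_of_nat_mult)
  finally show ?thesis by (simp add: exp_add[symmetric] algebra_simps)
qed

lemma sphere_fin: "finite {x\<in>V. gdist E r0 x = k}"
proof -
  have "{x\<in>V. gdist E r0 x = k} \<subseteq> hd ` gpaths E r0 k" using sphere_sub by blast
  then show ?thesis by (rule finite_subset) (rule finite_imageI[OF paths_fin])
qed

lemma Theta_fin: assumes th: "\<theta> > 0" shows "\<exists>\<alpha>0\<ge>0. \<forall>\<alpha>>\<alpha>0. Theta V E r0 \<alpha> \<theta> < \<infinity>"
proof -
  obtain A where A1: "A \<ge> 1" and DB: "\<forall>x\<in>V. real (deg E x) \<le> A * exp (\<gamma> * gdist E r0 x)"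
    using deg_bound by blast
  define L where "L = ln (real n)"
  have L0: "L \<ge> 0" using n1 unfolding L_def by simp
  define \<alpha>0 where "\<alpha>0 = L + 3 * \<gamma> + 2 * \<gamma> * \<theta>"
  have "\<alpha>0 \<ge> 0" using L0 gpos th unfolding \<alpha>0_def by simp
  moreover have "Theta V E r0 \<alpha> \<theta> < \<infinity>" if al: "\<alpha> > \<alpha>0" for \<alpha>
  proof -
    define S where "S k = {x\<in>V. gdist E r0 x = k}" for k
    define P where "P = {(x,y). x \<in> V \<and> E x y}"
    define Pk where "Pk k = {(x,y). x \<in> V \<and> E x y \<and> gdist E r0 x = k}" for k
    define t where "t = (\<lambda>(x,y). (real (deg E x) * real (deg E y)) powr \<theta> * exp (- \<alpha> * real (gdist E r0 x)))"
    define B where "B = A * A * exp \<gamma>"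
    define \<delta> where "\<delta> = L + 3 * \<gamma> + 2 * \<gamma> * \<theta> - \<alpha>"
    define c where "c k = A * A * B powr \<theta> * exp (real k * \<delta>)" for k
    have t_nn: "t z \<ge> 0" for z unfolding t_def by (auto simp: case_prod_beta)
    have Pk_eq: "Pk k = Sigma (S k) (\<lambda>x. {y. E x y})" for k
      unfolding Pk_def S_def by auto
    have Pk_fin: "finite (Pk k)" for k
      unfolding Pk_eq using sphere_fin[of k] finN by (intro finite_SigmaI) (auto simp: S_def)
    have Pk_card: "real (card (Pk k)) \<le> A * exp (k * (L + 2 * \<gamma>)) * (A * exp (\<gamma> * k))" for k
    proof -
      have "card (Pk k) = (\<Sum>x\<in>S k. deg E x)"
        unfolding Pk_eq deg_def using sphere_fin[of k] finN by (subst card_SigmaI) (auto simp: S_def)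
      then have "real (card (Pk k)) = (\<Sum>x\<in>S k. real (deg E x))" by simp
      also have "\<dots> \<le> real (card (S k)) * (A * exp (\<gamma> * k))"
        using DB by (intro sum_bounded_above) (auto simp: S_def)
      also have "\<dots> \<le> A * exp (k * (L + 2 * \<gamma>)) * (A * exp (\<gamma> * k))"
        using sphere_bound[OF A1 DB, of k] A1 by (intro mult_right_mono) (auto simp: S_def L_def)
      finally show ?thesis .
    qed
    have t_bound: "t z \<le> B powr \<theta> * exp (k * (2 * \<gamma> * \<theta> - \<alpha>))" if z: "z \<in> Pk k" for z k
    proof -
      obtain x y where xy: "z = (x,y)" "x \<in> V" "E x y" "gdist E r0 x = k" using z unfolding Pk_def by auto
      have yV: "y \<in> V" using edge xy by blast
      have dy: "gdist E r0 y \<le> k + 1" using gdist_adj[OF root xy(2) xy(3)] xy by simp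
      have degx: "real (deg E x) \<le> A * exp (\<gamma> * k)" using DB xy by auto
      have degy: "real (deg E y) \<le> A * exp (\<gamma> * (k + 1))"
      proof -
        have "real (deg E y) \<le> A * exp (\<gamma> * gdist E r0 y)" using DB yV by auto
        also have "\<dots> \<le> A * exp (\<gamma> * (k + 1))"
        proof -
          have "real (gdist E r0 y) \<le> real k + 1" using dy by linarith
          then show ?thesis using gpos A1 by (intro mult_left_mono) auto
        qed
        finally show ?thesis .
      qed
      have "real (deg E x) * real (deg E y) \<le> (A * exp (\<gamma> * k)) * (A * exp (\<gamma> * (k + 1)))"
        using degx degy by (intro mult_mono) auto
      also have "\<dots> = A * A * (exp \<gamma> * exp (2 * \<gamma> * k))"
      proof -
        have "\<gamma> * k + \<gamma> * (k + 1) = \<gamma> + 2 * \<gamma> * k" by (simp add: algebra_simps)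
        then have "exp (\<gamma> * k + \<gamma> * (k + 1)) = exp (\<gamma> + 2 * \<gamma> * k)" by (rule arg_cong)
        then have e: "exp (\<gamma> * k) * exp (\<gamma> * (k + 1)) = exp \<gamma> * exp (2 * \<gamma> * k)"
          unfolding exp_add .
        show ?thesis by (subst e[symmetric]) (simp only: mult_ac)
      qed
      also have "\<dots> = B * exp (2 * \<gamma> * k)" unfolding B_def by (simp only: mult_ac)
      finally have pr: "real (deg E x) * real (deg E y) \<le> B * exp (2 * \<gamma> * k)" .
      have tz: "t z = (real (deg E x) * real (deg E y)) powr \<theta> * exp (- \<alpha> * k)"
        using xy by (simp add: t_def)
      have "(real (deg E x) * real (deg E y)) powr \<theta> \<le> (B * exp (2 * \<gamma> * k)) powr \<theta>"
        using pr th by (intro powr_mono2) auto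
      also have "\<dots> = B powr \<theta> * exp (2 * \<gamma> * k * \<theta>)" by (simp add: powr_mult exp_powr_real)
      finally have "t z \<le> B powr \<theta> * exp (2 * \<gamma> * k * \<theta>) * exp (- \<alpha> * k)"
        unfolding tz by (intro mult_right_mono) auto
      also have "\<dots> = B powr \<theta> * exp (k * (2 * \<gamma> * \<theta> - \<alpha>))"
      proof -
        have "2 * \<gamma> * k * \<theta> + - \<alpha> * k = k * (2 * \<gamma> * \<theta> - \<alpha>)" by (simp add: algebra_simps)
        then have "exp (2 * \<gamma> * k * \<theta> + - \<alpha> * k) = exp (k * (2 * \<gamma> * \<theta> - \<alpha>))" by (rule arg_cong)
        then have e: "exp (2 * \<gamma> * k * \<theta>) * exp (- \<alpha> * k) = exp (k * (2 * \<gamma> * \<theta> - \<alpha>))"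
          unfolding exp_add .
        show ?thesis by (subst e[symmetric]) (rule mult.assoc)
      qed
      finally show ?thesis .
    qed
    have sum_Pk: "(\<Sum>z\<in>Pk k. t z) \<le> c k" for k
    proof -
      have "(\<Sum>z\<in>Pk k. t z) \<le> real (card (Pk k)) * (B powr \<theta> * exp (k * (2 * \<gamma> * \<theta> - \<alpha>)))"
        using t_bound by (intro sum_bounded_above) auto
      also have "\<dots> \<le> A * exp (k * (L + 2 * \<gamma>)) * (A * exp (\<gamma> * k)) * (B powr \<theta> * exp (k * (2 * \<gamma> * \<theta> - \<alpha>)))"
        using Pk_card by (intro mult_right_mono) auto
      also have "\<dots> = A * A * B powr \<theta> * (exp (k * (L + 2 * \<gamma>)) * exp (\<gamma> * k) * exp (k * (2 * \<gamma> * \<theta> - \<alpha>)))"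
        by (simp only: mult_ac)
      also have "\<dots> = c k"
      proof -
        have "k * (L + 2 * \<gamma>) + \<gamma> * k + k * (2 * \<gamma> * \<theta> - \<alpha>) = real k * \<delta>"
          unfolding \<delta>_def by (simp add: algebra_simps)
        then have "exp (k * (L + 2 * \<gamma>) + \<gamma> * k + k * (2 * \<gamma> * \<theta> - \<alpha>)) = exp (real k * \<delta>)" by (rule arg_cong)
        then have e: "exp (k * (L + 2 * \<gamma>)) * exp (\<gamma> * k) * exp (k * (2 * \<gamma> * \<theta> - \<alpha>)) = exp (real k * \<delta>)"
          unfolding exp_add .
        show ?thesis unfolding c_def by (simp only: e)
      qed
      finally show ?thesis .
    qed
    have \<delta>neg: "\<delta> < 0" using al unfolding \<delta>_def \<alpha>0_def by simp
    have summ: "summable c"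
    proof -
      have "summable (\<lambda>k. exp \<delta> ^ k)" using \<delta>neg by (intro summable_geometric) simp
      then have "summable (\<lambda>k. A * A * B powr \<theta> * exp \<delta> ^ k)" by (rule summable_mult)
      then show ?thesis unfolding c_def by (simp add: exp_of_nat_mult)
    qed
    have c_nn: "c k \<ge> 0" for k unfolding c_def B_def using A1 by simp
    have fin_sums: "(\<Sum>z\<in>F. t z) \<le> suminf c" if F: "finite F" "F \<subseteq> P" for F
    proof -
      define g where "g = (\<lambda>z::'a\<times>'a. gdist E r0 (fst z))"
      have "(\<Sum>z\<in>F. t z) = (\<Sum>k\<in>g ` F. \<Sum>z\<in>{z\<in>F. g z = k}. t z)" using F(1) by (rule sum.image_gen)
      also have "\<dots> \<le> (\<Sum>k\<in>g ` F. c k)"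
      proof (rule sum_mono)
        fix k assume "k \<in> g ` F"
        have "{z\<in>F. g z = k} \<subseteq> Pk k" using F unfolding P_def Pk_def g_def by auto
        then have "(\<Sum>z\<in>{z\<in>F. g z = k}. t z) \<le> (\<Sum>z\<in>Pk k. t z)" using Pk_fin t_nn by (intro sum_mono2) auto
        then show "(\<Sum>z\<in>{z\<in>F. g z = k}. t z) \<le> c k" using sum_Pk[of k] by linarith
      qed
      also have "\<dots> \<le> suminf c" using summ F c_nn by (intro sum_le_suminf) auto
      finally show ?thesis .
    qed
    have "Theta V E r0 \<alpha> \<theta> = (\<Sum>\<^sub>\<infinity>z\<in>P. ennreal (t z))"
      unfolding Theta_def P_def t_def
      apply (rule infsum_cong)
      apply (simp split: prod.splits)
      done
    also have "\<dots> \<le> ennreal (suminf c)"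
    proof (rule infsum_le_finite_sums)
      show "(\<lambda>z. ennreal (t z)) summable_on P" by (rule nonneg_summable_on_complete) simp
      fix F assume F: "finite F" "F \<subseteq> P"
      have "(\<Sum>z\<in>F. ennreal (t z)) = ennreal (\<Sum>z\<in>F. t z)" using t_nn by (simp add: sum_ennreal)
      then show "(\<Sum>z\<in>F. ennreal (t z)) \<le> ennreal (suminf c)" using fin_sums[OF F] by (simp add: ennreal_leI)
    qed
    also have "\<dots> < \<infinity>" by simp
    finally show ?thesis .
  qed
  ultimately show ?thesis by blast
qed

end

theorem theorem5p2:
  fixes V :: "'a set" and E :: "'a \<Rightarrow> 'a \<Rightarrow> bool" and r0 :: 'a
    and nstar :: nat and \<upsilon> \<epsilon> :: real and \<phi> :: "real \<Rightarrow> real"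
  assumes graph: "ugraph V E" and cnt: "countable V" and conn: "connected_graph V E"
    and lf: "locally_finite_graph V E" and root: "r0 \<in> V"
    and nstar: "nstar > 2"
    and pos: "\<upsilon> > 0" "\<epsilon> > 0"
    and phi_def: "\<And>b. b \<ge> real nstar + 1 \<Longrightarrow> \<phi> b = \<upsilon> * ln b * (ln (ln b)) powr (1 + \<epsilon>)"
    and phi1: "\<phi> (real nstar + 1) > 1"
    and GG: "in_GG V E nstar \<phi>"
  shows "\<forall>\<theta>>0. \<exists>\<alpha>0\<ge>0. \<forall>\<alpha>>\<alpha>0. Theta V E r0 \<alpha> \<theta> < \<infinity>"
proof -
  define c0 where "c0 = \<upsilon> * (ln (ln 4)) powr (1 + \<epsilon>)"
  have ln4: "1 < ln (4::real)"
  proof -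
    have "exp 1 < (4::real)" using exp_le by linarith
    then have "ln (exp 1) < ln (4::real)" by (subst ln_less_cancel_iff) auto
    then show ?thesis by simp
  qed
  have ll4: "ln (ln (4::real)) > 0" using ln4 by simp
  have c0pos: "c0 > 0" unfolding c0_def using pos ll4 by simp
  have sep: "real (deg E x) \<le> exp ((1 / c0) * gdist E x y) \<and> real (deg E y) \<le> exp ((1 / c0) * gdist E x y)"
    if xy: "x \<in> V" "y \<in> V" "x \<noteq> y" "deg E x > nstar" "deg E y > nstar" for x y
  proof -
    define b where "b = real (max (deg E x) (deg E y))"
    have b1: "b \<ge> real nstar + 1" unfolding b_def using xy by auto
    have b4: "b \<ge> 4" using b1 nstar by linarith
    have lnb: "ln b \<ge> ln 4" using b4 by simp
    have lnb0: "ln b \<ge> 0" using b4 by simp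
    have "ln (ln 4) \<le> ln (ln b)" using lnb ln4 by simp
    then have pw: "(ln (ln 4)) powr (1 + \<epsilon>) \<le> (ln (ln b)) powr (1 + \<epsilon>)"
      using ll4 pos by (intro powr_mono2) auto
    have "c0 * ln b = \<upsilon> * ln b * (ln (ln 4)) powr (1 + \<epsilon>)" unfolding c0_def by simp
    also have "\<dots> \<le> \<upsilon> * ln b * (ln (ln b)) powr (1 + \<epsilon>)"
      using pw pos lnb0 by (intro mult_left_mono) auto
    also have "\<dots> = \<phi> b" using phi_def b1 by simp
    also have "\<dots> \<le> real (gdist E x y)"
      using GG[unfolded in_GG_def, rule_format, OF xy(1) xy(2) xy(4) xy(5) xy(3)] unfolding b_def .
    finally have "c0 * ln b \<le> real (gdist E x y)" .
    then have "ln b \<le> (1 / c0) * gdist E x y" using c0pos by (simp add: field_simps)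
    then have "exp (ln b) \<le> exp ((1 / c0) * gdist E x y)" by simp
    then have "b \<le> exp ((1 / c0) * gdist E x y)" using b4 by simp
    then show ?thesis unfolding b_def by auto
  qed
  interpret gparam V E r0 nstar "1 / c0"
  proof unfold_locales
    show "ugraph V E" by (fact graph)
    show "connected_graph V E" by (fact conn)
    show "locally_finite_graph V E" by (fact lf)
    show "r0 \<in> V" by (fact root)
    show "1 \<le> nstar" using nstar by simp
    show "0 < 1 / c0" using c0pos by simp
    show "real (deg E x) \<le> exp (1 / c0 * real (gdist E x y)) \<and> real (deg E y) \<le> exp (1 / c0 * real (gdist E x y))"
      if "x \<in> V" "y \<in> V" "x \<noteq> y" "nstar < deg E x" "nstar < deg E y" for x y
      using sep[OF that] by simp
  qed
  show ?thesis using Theta_fin by blast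
qed


end
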